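(* Let $B(x)=\frac{x}{1+x^2}$, $B_0(x)=x$ and $B_j(x)=B(B_{j-1}(x))$ for $j\ge1$. For $j\ge0$, let $x_j\in\mathbb{C}$ be any root of $B_j(x)=-1$. Then $\Re(x_j)<0$. *)

theory Defs
  imports Complex_Main
begin

definition B :: "complex \<Rightarrow> complex" where
  "B x = x / (1 + x\<^sup>2)"

fun Bj :: "nat \<Rightarrow> complex \<Rightarrow> complex" where
  "Bj 0 x = x"
| "Bj (Suc j) x = B (Bj j x)"

end

theory Submission
  imports Defs
begin

lemma B_re: "Re (B y) < 0 \<Longrightarrow> Re y < 0"
proof -
  assume h: "Re (B y) < 0"
  have num: "Re y * Re (1 + y\<^sup>2) + Im y * Im (1 + y\<^sup>2) = Re y * (1 + (Re y)\<^sup>2 + (Im y)\<^sup>2)"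
    by (simp add: power2_eq_square algebra_simps)
  have "Re (B y) = Re y * (1 + (Re y)\<^sup>2 + (Im y)\<^sup>2) / ((Re (1 + y\<^sup>2))\<^sup>2 + (Im (1 + y\<^sup>2))\<^sup>2)"
    unfolding B_def Re_divide num[symmetric] by (rule refl)
  with h have "Re y * (1 + (Re y)\<^sup>2 + (Im y)\<^sup>2) < 0"
    by (metis add_nonneg_nonneg divide_nonneg_nonneg not_le zero_le_power2)
  moreover have "1 + (Re y)\<^sup>2 + (Im y)\<^sup>2 > 0" by (simp add: add_pos_nonneg)
  ultimately show ?thesis by (simp add: mult_less_0_iff)
qed

lemma Bj_re: "Re (Bj j x) < 0 \<Longrightarrow> Re x < 0"
  by (induction j) (auto dest: B_re)

theorem proposition2p7:
  fixes j :: nat and x :: complex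
  assumes "Bj j x = -1"
  shows "Re x < 0"
  using assms Bj_re[of j x] by simp

end
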